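(* Let $G$ be a countably infinite graph for which there exists a finite set $S\subseteq V(G)$ such that $G-S$ has no finite dominating set. Then for every $r\in\mathbb{N}$ and every $r$-coloring of the edges of $K_\mathbb{N}$, there is a monochromatic copy of $G$ whose vertex set has positive upper density (i.e. $G$ is $r$-Ramsey-dense).
   Context: $K_{\mathbb{N}}$ is the complete graph on $\mathbb{N}=\{1,2,\dots\}$. A copy of $G$ is a subgraph of $K_\mathbb{N}$ isomorphic to $G$; monochromatic means all its edges have the same color. Upper density of $V\subseteq\mathbb{N}$: $\overline{d}(V)=\limsup_{t\to\infty}|V\cap\{1,\dots,t\}|/t$. A set $X\subseteq V(G)$ is dominating if every vertex of $V(G)\setminus X$ has a neighbor in $X$. *)

theory Defs
  imports "HOL-Analysis.Analysis" "HOL-Library.Liminf_Limsup"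
begin

definition simple_graph :: "'a set \<Rightarrow> ('a \<Rightarrow> 'a \<Rightarrow> bool) \<Rightarrow> bool" where
  "simple_graph V E \<longleftrightarrow> (\<forall>u v. E u v \<longrightarrow> u \<in> V \<and> v \<in> V \<and> u \<noteq> v \<and> E v u)"

definition dominating :: "'a set \<Rightarrow> ('a \<Rightarrow> 'a \<Rightarrow> bool) \<Rightarrow> 'a set \<Rightarrow> bool" where
  "dominating W E X \<longleftrightarrow> X \<subseteq> W \<and> (\<forall>v \<in> W - X. \<exists>u \<in> X. E v u)"

definition upper_density :: "nat set \<Rightarrow> ereal" where
  "upper_density A = limsup (\<lambda>t. ereal (real (card (A \<inter> {1..t})) / real t))"

definition edge_coloring :: "nat \<Rightarrow> (nat set \<Rightarrow> nat) \<Rightarrow> bool" where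
  "edge_coloring r c \<longleftrightarrow> (\<forall>x y. 1 \<le> x \<longrightarrow> 1 \<le> y \<longrightarrow> x \<noteq> y \<longrightarrow> c {x, y} < r)"

definition mono_copy :: "'a set \<Rightarrow> ('a \<Rightarrow> 'a \<Rightarrow> bool) \<Rightarrow> (nat set \<Rightarrow> nat) \<Rightarrow> ('a \<Rightarrow> nat) \<Rightarrow> bool" where
  "mono_copy V E c f \<longleftrightarrow> inj_on f V \<and> f ` V \<subseteq> {1..} \<and>
     (\<exists>i. \<forall>u v. E u v \<longrightarrow> c {f u, f v} = i)"

end

theory Submission
  imports Defs
begin

lemma ud_mono: "A \<subseteq> B \<Longrightarrow> upper_density A \<le> upper_density B"
  unfolding upper_density_def
proof (rule Limsup_mono, rule always_eventually, rule allI)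
  fix t assume "A \<subseteq> B"
  then have "card (A \<inter> {1..t}) \<le> card (B \<inter> {1..t})" by (intro card_mono) auto
  then show "ereal (real (card (A \<inter> {1..t})) / real t) \<le> ereal (real (card (B \<inter> {1..t})) / real t)"
    by (simp add: divide_right_mono)
qed

lemma ud_Un: "upper_density (A \<union> B) \<le> upper_density A + upper_density B"
proof -
  have "upper_density (A \<union> B) \<le> limsup (\<lambda>t. ereal (real (card (A \<inter> {1..t})) / real t) + ereal (real (card (B \<inter> {1..t})) / real t))"
    unfolding upper_density_def
  proof (rule Limsup_mono, rule always_eventually, rule allI)
    fix t
    have "card ((A \<union> B) \<inter> {1..t}) \<le> card (A \<inter> {1..t}) + card (B \<inter> {1..t})"
      by (metis Int_Un_distrib2 card_Un_le)
    then have "real (card ((A \<union> B) \<inter> {1..t})) / real t \<le> real (card (A \<inter> {1..t})) / real t + real (card (B \<inter> {1..t})) / real t"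
      by (simp add: divide_right_mono flip: add_divide_distrib)
    then show "ereal (real (card ((A \<union> B) \<inter> {1..t})) / real t) \<le> ereal (real (card (A \<inter> {1..t})) / real t) + ereal (real (card (B \<inter> {1..t})) / real t)"
      by simp
  qed
  also have "\<dots> \<le> upper_density A + upper_density B"
    unfolding upper_density_def by (rule ereal_limsup_add_mono)
  finally show ?thesis .
qed

lemma ud_finite: assumes "finite A" shows "upper_density A \<le> 0"
proof -
  have "upper_density A \<le> limsup (\<lambda>t. ereal (real (card A) / real t))"
    unfolding upper_density_def
  proof (rule Limsup_mono, rule always_eventually, rule allI)
    fix t
    have "card (A \<inter> {1..t}) \<le> card A" using assms by (intro card_mono) auto
    then show "ereal (real (card (A \<inter> {1..t})) / real t) \<le> ereal (real (card A) / real t)"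
      by (simp add: divide_right_mono)
  qed
  also have "limsup (\<lambda>t. ereal (real (card A) / real t)) = 0"
  proof (rule lim_imp_Limsup)
    show "\<not> trivial_limit sequentially" by simp
    have "(\<lambda>t. real (card A) / real t) \<longlonglongrightarrow> 0"
      by real_asymp
    then show "(\<lambda>t. ereal (real (card A) / real t)) \<longlonglongrightarrow> 0"
      by (simp add: zero_ereal_def tendsto_ereal)
  qed
  finally show ?thesis .
qed

lemma ud_UNIV: "\<not> upper_density UNIV \<le> 0"
proof -
  have "1 \<le> upper_density UNIV"
  proof -
    have "limsup (\<lambda>t. (1::ereal)) \<le> upper_density UNIV"
      unfolding upper_density_def
    proof (rule Limsup_mono, rule eventually_sequentiallyI[of 1])
      fix t :: nat assume "1 \<le> t"
      then show "(1::ereal) \<le> ereal (real (card (UNIV \<inter> {1..t})) / real t)" by simp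
    qed
    then show ?thesis by (simp add: Limsup_const)
  qed
  show ?thesis
  proof
    assume "upper_density UNIV \<le> 0"
    with \<open>1 \<le> upper_density UNIV\<close> have "(1::ereal) \<le> 0" by (rule order_trans)
    then show False by simp
  qed
qed

definition is_ideal :: "nat set set \<Rightarrow> bool" where
  "is_ideal I \<longleftrightarrow> (\<forall>A. upper_density A \<le> 0 \<longrightarrow> A \<in> I) \<and> (\<forall>A B. A \<in> I \<longrightarrow> B \<subseteq> A \<longrightarrow> B \<in> I)
     \<and> (\<forall>A B. A \<in> I \<longrightarrow> B \<in> I \<longrightarrow> A \<union> B \<in> I) \<and> UNIV \<notin> I"

lemma Z_ideal: "is_ideal {A. upper_density A \<le> 0}"
proof -
  have "upper_density (A \<union> B) \<le> 0" if "upper_density A \<le> 0" "upper_density B \<le> 0" for A B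
  proof -
    have "upper_density A + upper_density B \<le> 0 + 0" using that by (rule add_mono)
    then show ?thesis using ud_Un[of A B] by simp
  qed
  moreover have "upper_density B \<le> 0" if "upper_density A \<le> 0" "B \<subseteq> A" for A B
    using ud_mono[of B A] that by simp
  ultimately show ?thesis unfolding is_ideal_def using ud_UNIV by auto
qed

lemma exists_max_ideal: "\<exists>I. is_ideal I \<and> (\<forall>A. A \<in> I \<or> -A \<in> I)"
proof -
  let ?F = "{I. is_ideal I}"
  have "\<exists>M\<in>?F. \<forall>X\<in>?F. M \<subseteq> X \<longrightarrow> X = M"
  proof (rule Zorn_Lemma2, rule ballI)
    fix Ch assume Ch: "Ch \<in> chains ?F"
    show "\<exists>U\<in>?F. \<forall>X\<in>Ch. X \<subseteq> U"
    proof (cases "Ch = {}")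
      case True then show ?thesis using Z_ideal by auto
    next
      case False
      have sub: "Ch \<subseteq> ?F" and ch: "\<forall>X\<in>Ch. \<forall>Y\<in>Ch. X \<subseteq> Y \<or> Y \<subseteq> X"
        using Ch unfolding chains_def chain_subset_def by auto
      have "is_ideal (\<Union>Ch)"
        unfolding is_ideal_def
      proof (intro conjI allI impI)
        fix A assume "upper_density A \<le> 0"
        then show "A \<in> \<Union>Ch" using False sub unfolding is_ideal_def by blast
      next
        fix A B assume "A \<in> \<Union>Ch" "B \<subseteq> A"
        then show "B \<in> \<Union>Ch" using sub unfolding is_ideal_def by blast
      next
        fix A B assume "A \<in> \<Union>Ch" "B \<in> \<Union>Ch"
        then obtain X Y where "X \<in> Ch" "Y \<in> Ch" "A \<in> X" "B \<in> Y" by auto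
        moreover have "is_ideal X" "is_ideal Y" using sub \<open>X \<in> Ch\<close> \<open>Y \<in> Ch\<close> by auto
        ultimately show "A \<union> B \<in> \<Union>Ch"
        proof (cases "X \<subseteq> Y")
          case True
          then have "A \<union> B \<in> Y" using \<open>is_ideal Y\<close> \<open>A \<in> X\<close> \<open>B \<in> Y\<close> unfolding is_ideal_def by blast
          then show ?thesis using \<open>Y \<in> Ch\<close> by blast
        next
          case False
          then have "Y \<subseteq> X" using ch \<open>X \<in> Ch\<close> \<open>Y \<in> Ch\<close> by blast
          then have "A \<union> B \<in> X" using \<open>is_ideal X\<close> \<open>A \<in> X\<close> \<open>B \<in> Y\<close> unfolding is_ideal_def by blast
          then show ?thesis using \<open>X \<in> Ch\<close> by blast
        qed
      next
        show "UNIV \<notin> \<Union>Ch" using sub unfolding is_ideal_def by blast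
      qed
      then show ?thesis by auto
    qed
  qed
  then obtain M where M: "is_ideal M" and max: "\<And>X. is_ideal X \<Longrightarrow> M \<subseteq> X \<Longrightarrow> X = M" by auto
  have "A \<in> M \<or> -A \<in> M" for A
  proof (cases "A \<in> M")
    case False
    define M' where "M' = {B. \<exists>X\<in>M. B \<subseteq> X \<union> A}"
    have "M \<subseteq> M'" unfolding M'_def by auto
    moreover have "{} \<in> M" using M ud_finite[of "{}"] unfolding is_ideal_def by auto
    then have "A \<in> M'" unfolding M'_def by blast
    ultimately have "M' \<noteq> M" using False by auto
    then have "\<not> is_ideal M'" using max \<open>M \<subseteq> M'\<close> by auto
    moreover have "(\<forall>A. upper_density A \<le> 0 \<longrightarrow> A \<in> M') \<and> (\<forall>A B. A \<in> M' \<longrightarrow> B \<subseteq> A \<longrightarrow> B \<in> M')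
     \<and> (\<forall>A B. A \<in> M' \<longrightarrow> B \<in> M' \<longrightarrow> A \<union> B \<in> M')"
    proof (intro conjI allI impI)
      fix B assume "upper_density B \<le> 0" then show "B \<in> M'" using M \<open>M \<subseteq> M'\<close> unfolding is_ideal_def by auto
    next
      fix B B' assume "B \<in> M'" "B' \<subseteq> B" then show "B' \<in> M'" unfolding M'_def by blast
    next
      fix B B' assume "B \<in> M'" "B' \<in> M'"
      then obtain X X' where "X \<in> M" "X' \<in> M" "B \<subseteq> X \<union> A" "B' \<subseteq> X' \<union> A" unfolding M'_def by auto
      moreover have "X \<union> X' \<in> M" using M calculation unfolding is_ideal_def by auto
      ultimately show "B \<union> B' \<in> M'" unfolding M'_def by blast
    qed
    ultimately have "UNIV \<in> M'" unfolding is_ideal_def by blast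
    then obtain X where "X \<in> M" "UNIV \<subseteq> X \<union> A" unfolding M'_def by auto
    then have "-A \<subseteq> X" by auto
    then have "-A \<in> M" using M \<open>X \<in> M\<close> unfolding is_ideal_def by blast
    then show ?thesis by simp
  qed simp
  then show ?thesis using M by auto
qed


definition Nb :: "(nat set \<Rightarrow> nat) \<Rightarrow> nat \<Rightarrow> nat \<Rightarrow> nat set" where
  "Nb c j x = {y. 1 \<le> y \<and> y \<noteq> x \<and> c {x, y} = j}"

locale bigsets =
  fixes I :: "nat set set"
  assumes I: "is_ideal I" and maxI: "\<And>A. A \<in> I \<or> -A \<in> I"
begin

lemma fin_in: "finite A \<Longrightarrow> A \<in> I"
  using I ud_finite unfolding is_ideal_def by blast

lemma mono_out: "A \<notin> I \<Longrightarrow> A \<subseteq> B \<Longrightarrow> B \<notin> I"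
  using I unfolding is_ideal_def by blast

lemma UNIV_out: "UNIV \<notin> I" using I unfolding is_ideal_def by blast

lemma Un_in: "A \<in> I \<Longrightarrow> B \<in> I \<Longrightarrow> A \<union> B \<in> I"
  using I unfolding is_ideal_def by blast

lemma Int_out: assumes "A \<notin> I" "B \<notin> I" shows "A \<inter> B \<notin> I"
proof
  assume "A \<inter> B \<in> I"
  have "-A \<in> I" "-B \<in> I" using assms maxI by auto
  then have "(A \<inter> B) \<union> (-A \<union> -B) \<in> I" using Un_in \<open>A \<inter> B \<in> I\<close> by auto
  moreover have "(A \<inter> B) \<union> (-A \<union> -B) = UNIV" by auto
  ultimately show False using UNIV_out by simp
qed

lemma out_pos: "A \<notin> I \<Longrightarrow> upper_density A > 0"
  using I unfolding is_ideal_def by force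

lemma out_infinite: "A \<notin> I \<Longrightarrow> infinite A"
  using fin_in by blast

lemma INT_out: "finite F \<Longrightarrow> (\<forall>x\<in>F. A x \<notin> I) \<Longrightarrow> (\<Inter>x\<in>F. A x) \<notin> I"
proof (induction F rule: finite_induct)
  case empty then show ?case using UNIV_out by simp
next
  case (insert x F) then show ?case using Int_out by simp
qed

lemma UN_out: "finite J \<Longrightarrow> (\<Union>j\<in>J. A j) \<notin> I \<Longrightarrow> \<exists>j\<in>J. A j \<notin> I"
proof (induction J rule: finite_induct)
  case empty then show ?case using fin_in by simp
next
  case (insert x F) then show ?case using Un_in by auto
qed

lemma ge1_out: "{1..} \<notin> I"
proof
  assume "{1..} \<in> I"
  moreover have "{0::nat} \<in> I" using fin_in by simp
  ultimately have "{1..} \<union> {0} \<in> I" using Un_in by blast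
  moreover have "{1..} \<union> {0::nat} = UNIV" by auto
  ultimately show False using UNIV_out by simp
qed

lemma color_set:
  assumes "edge_coloring r c"
  shows "\<exists>i C. C \<subseteq> {1..} \<and> C \<notin> I \<and> (\<forall>x\<in>C. Nb c i x \<notin> I)"
proof -
  have ex: "\<exists>j. j < r \<and> Nb c j x \<notin> I" if "1 \<le> x" for x
  proof -
    have "-{x} \<notin> I"
    proof
      assume "-{x} \<in> I"
      then have "{x} \<union> -{x} \<in> I" using fin_in[of "{x}"] Un_in by blast
      then show False using UNIV_out by simp
    qed
    then have "{1..} \<inter> -{x} \<notin> I" using ge1_out Int_out by blast
    moreover have "{1..} \<inter> -{x} \<subseteq> (\<Union>j\<in>{..<r}. Nb c j x)"
      using assms that unfolding edge_coloring_def Nb_def by auto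
    ultimately have "(\<Union>j\<in>{..<r}. Nb c j x) \<notin> I" by (rule mono_out)
    then show ?thesis using UN_out[of "{..<r}"] by auto
  qed
  define col where "col x = (SOME j. j < r \<and> Nb c j x \<notin> I)" for x
  have col: "col x < r \<and> Nb c (col x) x \<notin> I" if "1 \<le> x" for x
    unfolding col_def using someI_ex[OF ex[OF that]] .
  have "{1..} \<subseteq> (\<Union>j\<in>{..<r}. {x. 1 \<le> x \<and> col x = j})" using col by auto
  then have "(\<Union>j\<in>{..<r}. {x. 1 \<le> x \<and> col x = j}) \<notin> I" using ge1_out mono_out by blast
  then obtain i where "{x. 1 \<le> x \<and> col x = i} \<notin> I" using UN_out[of "{..<r}"] by auto
  then show ?thesis using col by (intro exI[of _ i] exI[of _ "{x. 1 \<le> x \<and> col x = i}"]) auto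
qed

end


locale constr = bigsets I for I +
  fixes V :: "'a set" and E :: "'a \<Rightarrow> 'a \<Rightarrow> bool" and S :: "'a set"
    and c :: "nat set \<Rightarrow> nat" and i :: nat and C :: "nat set" and enum :: "nat \<Rightarrow> 'a"
  assumes G: "simple_graph V E" and infV: "infinite V" and enum: "bij_betw enum UNIV V"
    and finS: "finite S" and SV: "S \<subseteq> V"
    and nodom: "\<not> (\<exists>X. finite X \<and> dominating (V - S) E X)"
    and C1: "C \<subseteq> {1..}" and Cout: "C \<notin> I" and CNb: "\<And>x. x \<in> C \<Longrightarrow> Nb c i x \<notin> I"
begin

definition good :: "'a set \<Rightarrow> ('a \<Rightarrow> nat) \<Rightarrow> bool" where
  "good D g \<longleftrightarrow> D \<subseteq> V \<and> finite D \<and> inj_on g D \<and> g ` D \<subseteq> C \<and>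
     (\<forall>u\<in>D. \<forall>v\<in>D. E u v \<longrightarrow> c {g u, g v} = i)"

definition ext_pt :: "'a set \<Rightarrow> ('a \<Rightarrow> nat) \<Rightarrow> nat" where
  "ext_pt D g = (SOME p. p \<in> C \<inter> (\<Inter>u\<in>D. Nb c i (g u)) \<and> p \<notin> g ` D)"

lemma ext_pt: assumes "good D g"
  shows "ext_pt D g \<in> C \<inter> (\<Inter>u\<in>D. Nb c i (g u)) \<and> ext_pt D g \<notin> g ` D"
proof -
  have fin: "finite D" using assms unfolding good_def by auto
  have "\<forall>u\<in>D. Nb c i (g u) \<notin> I" using assms CNb unfolding good_def by blast
  then have "(\<Inter>u\<in>D. Nb c i (g u)) \<notin> I"
    using fin by (intro INT_out)
  then have "C \<inter> (\<Inter>u\<in>D. Nb c i (g u)) \<notin> I" using Cout Int_out by blast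
  then have "infinite (C \<inter> (\<Inter>u\<in>D. Nb c i (g u)))" by (rule out_infinite)
  then have "infinite (C \<inter> (\<Inter>u\<in>D. Nb c i (g u)) - g ` D)"
    using fin by (simp add: Diff_infinite_finite)
  then obtain p where "p \<in> C \<inter> (\<Inter>u\<in>D. Nb c i (g u)) - g ` D"
    by (metis ex_in_conv finite.emptyI)
  then have "\<exists>p. p \<in> C \<inter> (\<Inter>u\<in>D. Nb c i (g u)) \<and> p \<notin> g ` D" by blast
  then show ?thesis unfolding ext_pt_def by (rule someI_ex)
qed

lemma E_sym: "E u v \<Longrightarrow> E v u" and E_V: "E u v \<Longrightarrow> u \<in> V \<and> v \<in> V" and E_irr: "E u v \<Longrightarrow> u \<noteq> v"
  using G unfolding simple_graph_def by auto

lemma ext_good: assumes "good D g" "v \<in> V" "v \<notin> D"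
  shows "good (insert v D) (g(v := ext_pt D g))"
proof -
  let ?p = "ext_pt D g"
  have p: "?p \<in> C" "\<And>u. u \<in> D \<Longrightarrow> ?p \<in> Nb c i (g u)" "?p \<notin> g ` D" using ext_pt[OF assms(1)] by auto
  have gD: "(g(v := ?p)) ` D = g ` D" using assms(3) by auto
  have edges: "c {(g(v := ?p)) x, (g(v := ?p)) y} = i" if "x \<in> insert v D" "y \<in> insert v D" "E x y" for x y
  proof -
    note hh = that
    have "x \<noteq> y" using E_irr that(3) by blast
    consider "x \<in> D" "y \<in> D" | "x = v" "y \<in> D" | "x \<in> D" "y = v" using hh \<open>x \<noteq> y\<close> by auto
    then show ?thesis
    proof cases
      case 1
      then have "x \<noteq> v" "y \<noteq> v" using assms(3) by auto
      then show ?thesis using 1 assms(1) that(3) unfolding good_def by auto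
    next
      case 2
      then have "c {g y, ?p} = i" using p(2)[of y] unfolding Nb_def by auto
      then show ?thesis using 2 assms(3) by (auto simp: insert_commute)
    next
      case 3
      then have "c {g x, ?p} = i" using p(2)[of x] unfolding Nb_def by auto
      then show ?thesis using 3 assms(3) by auto
    qed
  qed
  have inj: "inj_on (g(v := ?p)) (insert v D)"
  proof -
    have "inj_on g D" using assms(1) unfolding good_def by auto
    moreover have "inj_on (g(v := ?p)) D = inj_on g D" using assms(3) by (intro inj_on_cong) auto
    ultimately have "inj_on (g(v := ?p)) D" by simp
    then show ?thesis using gD p(3) assms(3) by (simp add: inj_on_insert)
  qed
  have "(g(v := ?p)) ` (insert v D) \<subseteq> C" using gD p(1) assms(1) unfolding good_def by auto
  moreover have "insert v D \<subseteq> V" "finite (insert v D)" using assms unfolding good_def by auto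
  ultimately show ?thesis
    using inj edges unfolding good_def by blast
qed

lemma init: "finite F \<Longrightarrow> F \<subseteq> V \<Longrightarrow> \<exists>g. good F g"
proof (induction F rule: finite_induct)
  case empty then show ?case unfolding good_def by auto
next
  case (insert x F)
  then obtain g where "good F g" by auto
  then show ?case using ext_good insert by blast
qed

definition g0 where "g0 = (SOME g. good S g)"

lemma g0: "good S g0"
  unfolding g0_def using init[OF finS SV] by (rule someI_ex)

definition C' where "C' = C \<inter> (\<Inter>s\<in>S. Nb c i (g0 s))"

lemma C'_out: "C' \<notin> I"
proof -
  have "\<forall>u\<in>S. Nb c i (g0 u) \<notin> I" using g0 CNb unfolding good_def by blast
  then have "(\<Inter>s\<in>S. Nb c i (g0 s)) \<notin> I"
    using finS by (intro INT_out)
  then show ?thesis unfolding C'_def using Cout Int_out by blast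
qed

definition fillv :: "'a set \<Rightarrow> 'a" where
  "fillv D = (SOME w. w \<in> V \<and> w \<notin> D \<and> (\<forall>u\<in>D - S. \<not> E w u))"

lemma fillv: assumes "finite D" "D \<subseteq> V"
  shows "fillv D \<in> V \<and> fillv D \<notin> D \<and> (\<forall>u\<in>D - S. \<not> E (fillv D) u)"
proof -
  define X0 where "X0 = D - S"
  define Y where "Y = {v \<in> V - S - X0. \<not> (\<exists>u\<in>X0. E v u)}"
  have "Y \<noteq> {}"
  proof
    assume "Y = {}"
    then have "dominating (V - S) E X0" unfolding dominating_def X0_def Y_def using assms by auto
    moreover have "finite X0" using assms X0_def by auto
    ultimately show False using nodom by blast
  qed
  then obtain w where "w \<in> Y" by auto
  then have "w \<in> V \<and> w \<notin> D \<and> (\<forall>u\<in>D - S. \<not> E w u)" unfolding Y_def X0_def by auto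
  then show ?thesis unfolding fillv_def by (rule someI)
qed

definition fillpt :: "'a set \<Rightarrow> ('a \<Rightarrow> nat) \<Rightarrow> nat" where
  "fillpt D g = (LEAST a. a \<in> C' \<and> a \<notin> g ` D)"

lemma fillpt_ex: assumes "finite D" shows "\<exists>a. a \<in> C' \<and> a \<notin> g ` D"
proof -
  have "infinite C'" using C'_out out_infinite by blast
  then have "infinite (C' - g ` D)"
    using assms by (simp add: Diff_infinite_finite)
  then obtain p where "p \<in> C' - g ` D"
    by (metis ex_in_conv finite.emptyI)
  then show ?thesis by blast
qed

lemma fillpt: assumes "finite D" shows "fillpt D g \<in> C' \<and> fillpt D g \<notin> g ` D"
  unfolding fillpt_def using fillpt_ex[OF assms] by (rule LeastI_ex)

definition Inv where "Inv D g \<longleftrightarrow> good D g \<and> S \<subseteq> D \<and> (\<forall>s\<in>S. g s = g0 s)"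

lemma fill_good: assumes "Inv D g"
  shows "Inv (insert (fillv D) D) (g(fillv D := fillpt D g))"
proof -
  let ?w = "fillv D" and ?a = "fillpt D g"
  have gd: "good D g" and SD: "S \<subseteq> D" and gS: "\<forall>s\<in>S. g s = g0 s" using assms unfolding Inv_def by auto
  have fin: "finite D" and DV: "D \<subseteq> V" using gd unfolding good_def by auto
  have w: "?w \<in> V" "?w \<notin> D" "\<And>u. u \<in> D - S \<Longrightarrow> \<not> E ?w u" using fillv[OF fin DV] by auto
  have a: "?a \<in> C'" "?a \<notin> g ` D" using fillpt[OF fin] by auto
  have aC: "?a \<in> C" and aNb: "\<And>s. s \<in> S \<Longrightarrow> ?a \<in> Nb c i (g0 s)" using a(1) unfolding C'_def by auto
  have edges: "c {(g(?w := ?a)) x, (g(?w := ?a)) y} = i" if "x \<in> insert ?w D" "y \<in> insert ?w D" "E x y" for x y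
  proof -
    note hh = that
    have "x \<noteq> y" using E_irr that(3) by blast
    consider "x \<in> D" "y \<in> D" | "x = ?w" "y \<in> D" | "x \<in> D" "y = ?w" using hh \<open>x \<noteq> y\<close> by auto
    then show ?thesis
    proof cases
      case 1
      then have "x \<noteq> ?w" "y \<noteq> ?w" using w(2) by auto
      then show ?thesis using 1 gd that(3) unfolding good_def by auto
    next
      case 2
      then have "y \<in> S" using w(3) that(3) by blast
      then have "c {g y, ?a} = i" using aNb[of y] gS unfolding Nb_def by auto
      then show ?thesis using 2 w(2) by (auto simp: insert_commute)
    next
      case 3
      then have "x \<in> S" using w(3) E_sym[OF that(3)] by blast
      then have "c {g x, ?a} = i" using aNb[of x] gS unfolding Nb_def by auto
      then show ?thesis using 3 w(2) by auto
    qed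
  qed
  have gD: "(g(?w := ?a)) ` D = g ` D" using w(2) by auto
  have inj: "inj_on (g(?w := ?a)) (insert ?w D)"
  proof -
    have "inj_on g D" using gd unfolding good_def by auto
    moreover have "inj_on (g(?w := ?a)) D = inj_on g D" using w(2) by (intro inj_on_cong) auto
    ultimately have "inj_on (g(?w := ?a)) D" by simp
    then show ?thesis using gD a(2) w(2) by (simp add: inj_on_insert)
  qed
  have "(g(?w := ?a)) ` (insert ?w D) \<subseteq> C" using gD aC gd unfolding good_def by auto
  moreover have "insert ?w D \<subseteq> V" "finite (insert ?w D)" using gd w unfolding good_def by auto
  ultimately have "good (insert ?w D) (g(?w := ?a))"
    using inj edges unfolding good_def by blast
  moreover have "\<forall>s\<in>S. (g(?w := ?a)) s = g0 s" using gS SD w(2) by auto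
  ultimately show ?thesis using SD unfolding Inv_def by auto
qed


definition nextv :: "'a set \<Rightarrow> 'a" where
  "nextv D = enum (LEAST k. enum k \<notin> D)"

lemma nextv: assumes "finite D" shows "nextv D \<in> V \<and> nextv D \<notin> D"
proof -
  have "infinite (V - D)" using infV assms by (simp add: Diff_infinite_finite)
  then obtain x where "x \<in> V - D" by (metis ex_in_conv finite.emptyI)
  moreover have "enum ` UNIV = V" using enum by (simp add: bij_betw_def)
  ultimately obtain k where "enum k \<notin> D" by auto
  then have "enum (LEAST k. enum k \<notin> D) \<notin> D" by (rule LeastI)
  moreover have "enum (LEAST k. enum k \<notin> D) \<in> V" using \<open>enum ` UNIV = V\<close> by auto
  ultimately show ?thesis unfolding nextv_def by auto
qed

definition step :: "'a set \<times> ('a \<Rightarrow> nat) \<Rightarrow> 'a set \<times> ('a \<Rightarrow> nat)" where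
  "step p = (let D = fst p; g = snd p; v = nextv D; D1 = insert v D; g1 = g(v := ext_pt D g);
      w = fillv D1 in (insert w D1, g1(w := fillpt D1 g1)))"

lemma step_form: assumes "Inv D g"
  shows "\<exists>v w. v = nextv D \<and> v \<notin> D \<and> w \<notin> insert v D \<and>
     fst (step (D, g)) = insert w (insert v D) \<and>
     snd (step (D, g)) = (g(v := ext_pt D g))(w := fillpt (insert v D) (g(v := ext_pt D g))) \<and>
     Inv (insert v D) (g(v := ext_pt D g)) \<and> Inv (fst (step (D, g))) (snd (step (D, g)))"
proof -
  have gd: "good D g" and SD: "S \<subseteq> D" and gS: "\<forall>s\<in>S. g s = g0 s" using assms unfolding Inv_def by auto
  have fin: "finite D" using gd unfolding good_def by auto
  define v where "v = nextv D"
  have v: "v \<in> V" "v \<notin> D" using nextv[OF fin] v_def by auto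
  define g1 where "g1 = g(v := ext_pt D g)"
  have I1: "Inv (insert v D) g1"
  proof -
    have "good (insert v D) g1" unfolding g1_def by (rule ext_good[OF gd v])
    moreover have "\<forall>s\<in>S. g1 s = g0 s" unfolding g1_def using gS SD v(2) by auto
    ultimately show ?thesis unfolding Inv_def using SD by auto
  qed
  define w where "w = fillv (insert v D)"
  have "finite (insert v D)" "insert v D \<subseteq> V" using I1 unfolding Inv_def good_def by auto
  then have w: "w \<notin> insert v D" using fillv[of "insert v D"] unfolding w_def by blast
  have st: "step (D, g) = (insert w (insert v D), g1(w := fillpt (insert v D) g1))"
    unfolding step_def v_def g1_def w_def by (simp add: Let_def)
  have A: "Inv (fst (step (D, g))) (snd (step (D, g)))"
    unfolding st using fill_good[OF I1] unfolding w_def by simp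
  have B: "fst (step (D, g)) = insert w (insert v D)" "snd (step (D, g)) = g1(w := fillpt (insert v D) g1)"
    using st by simp_all
  show ?thesis
    apply (rule exI[of _ v], rule exI[of _ w])
    using A B v w I1 unfolding g1_def v_def by blast
qed

definition st :: "nat \<Rightarrow> 'a set \<times> ('a \<Rightarrow> nat)" where
  "st n = rec_nat (S, g0) (\<lambda>_ p. step p) n"

lemma st_0: "st 0 = (S, g0)" and st_Suc: "st (Suc n) = step (st n)"
  unfolding st_def by simp_all

abbreviation "DD n \<equiv> fst (st n)"
abbreviation "gg n \<equiv> snd (st n)"

lemma Inv_st: "Inv (DD n) (gg n)"
proof (induction n)
  case 0 then show ?case using g0 unfolding st_0 Inv_def by auto
next
  case (Suc n)
  have "Inv (fst (step (DD n, gg n))) (snd (step (DD n, gg n)))" using step_form[OF Suc] by blast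
  then show ?case by (simp add: st_Suc)
qed

lemma step_ext: "DD n \<subseteq> DD (Suc n) \<and> (\<forall>x\<in>DD n. gg (Suc n) x = gg n x)"
proof -
  have e: "st n = (DD n, gg n)" by simp
  obtain v w where "v \<notin> DD n" "w \<notin> insert v (DD n)"
     "fst (step (DD n, gg n)) = insert w (insert v (DD n))"
     "snd (step (DD n, gg n)) = ((gg n)(v := ext_pt (DD n) (gg n)))(w := fillpt (insert v (DD n)) ((gg n)(v := ext_pt (DD n) (gg n))))"
    using step_form[OF Inv_st[of n]] by blast
  then show ?thesis unfolding st_Suc by (subst e) auto
qed

lemma mono_st: "n \<le> m \<Longrightarrow> DD n \<subseteq> DD m \<and> (\<forall>x\<in>DD n. gg m x = gg n x)"
proof (induction m)
  case 0 then show ?case by simp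
next
  case (Suc m)
  show ?case
  proof (cases "n = Suc m")
    case False
    then have "n \<le> m" using Suc.prems by simp
    then show ?thesis using Suc.IH step_ext[of m] by auto
  qed simp
qed

lemma cover_enum: "\<forall>j<n. enum j \<in> DD n"
proof (induction n)
  case 0 then show ?case by simp
next
  case (Suc n)
  have "enum n \<in> DD (Suc n)"
  proof (cases "enum n \<in> DD n")
    case True then show ?thesis using step_ext by blast
  next
    case False
    have "(LEAST k. enum k \<notin> DD n) = n"
    proof (rule Least_equality)
      show "enum n \<notin> DD n" by fact
      fix k assume "enum k \<notin> DD n" then show "n \<le> k" using Suc.IH by (meson not_le)
    qed
    then have "nextv (DD n) = enum n" unfolding nextv_def by simp
    moreover have e: "st n = (DD n, gg n)" by simp
    ultimately show ?thesis using step_form[OF Inv_st[of n]] unfolding st_Suc by (subst e) auto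
  qed
  then show ?case using Suc.IH step_ext[of n] by (auto simp: less_Suc_eq)
qed

lemma cover_V: "x \<in> V \<Longrightarrow> \<exists>n. x \<in> DD n"
proof -
  assume "x \<in> V"
  moreover have "enum ` UNIV = V" using enum by (simp add: bij_betw_def)
  ultimately obtain j where "x = enum j" by auto
  then show ?thesis using cover_enum[of "Suc j"] by auto
qed

definition f :: "'a \<Rightarrow> nat" where "f x = gg (LEAST n. x \<in> DD n) x"

lemma f_eq: assumes "x \<in> DD n" shows "f x = gg n x"
proof -
  let ?m = "LEAST n. x \<in> DD n"
  have "x \<in> DD ?m" using assms by (rule LeastI)
  moreover have "?m \<le> n" using assms by (rule Least_le)
  ultimately show ?thesis unfolding f_def using mono_st[of ?m n] by simp
qed

lemma DD_V: "DD n \<subseteq> V" using Inv_st[of n] unfolding Inv_def good_def by auto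

lemma common: "x \<in> V \<Longrightarrow> y \<in> V \<Longrightarrow> \<exists>n. x \<in> DD n \<and> y \<in> DD n"
proof -
  assume "x \<in> V" "y \<in> V"
  then obtain n1 n2 where "x \<in> DD n1" "y \<in> DD n2" using cover_V by blast
  then show ?thesis using mono_st[of n1 "max n1 n2"] mono_st[of n2 "max n1 n2"] by auto
qed

lemma f_mono_copy: "mono_copy V E c f"
proof -
  have "inj_on f V"
  proof (rule inj_onI)
    fix x y assume "x \<in> V" "y \<in> V" "f x = f y"
    then obtain n where n: "x \<in> DD n" "y \<in> DD n" using common by blast
    then have "gg n x = gg n y" using \<open>f x = f y\<close> f_eq by simp
    then show "x = y" using n Inv_st[of n] unfolding Inv_def good_def by (meson inj_onD)
  qed
  moreover have "f ` V \<subseteq> {1..}"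
  proof
    fix y assume "y \<in> f ` V"
    then obtain x where "x \<in> V" "y = f x" by auto
    then obtain n where "x \<in> DD n" using cover_V by blast
    then have "y \<in> C" using \<open>y = f x\<close> f_eq Inv_st[of n] unfolding Inv_def good_def by auto
    then show "y \<in> {1..}" using C1 by auto
  qed
  moreover have "\<forall>u v. E u v \<longrightarrow> c {f u, f v} = i"
  proof (intro allI impI)
    fix u v assume "E u v"
    then have "u \<in> V" "v \<in> V" using E_V by auto
    then obtain n where n: "u \<in> DD n" "v \<in> DD n" using common by blast
    then show "c {f u, f v} = i" using \<open>E u v\<close> f_eq Inv_st[of n] unfolding Inv_def good_def by auto
  qed
  ultimately show ?thesis unfolding mono_copy_def by blast
qed

lemma used_mono: "n \<le> m \<Longrightarrow> gg n ` DD n \<subseteq> gg m ` DD m"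
proof -
  assume "n \<le> m"
  then have "DD n \<subseteq> DD m" "\<forall>x\<in>DD n. gg m x = gg n x" using mono_st by auto
  then have "gg n ` DD n = gg m ` DD n" by (intro image_cong) auto
  then show ?thesis using \<open>DD n \<subseteq> DD m\<close> by auto
qed

lemma fill_cover: "\<exists>N. \<forall>b<k. b \<in> C' \<longrightarrow> b \<in> gg N ` DD N"
proof (induction k)
  case 0 then show ?case by simp
next
  case (Suc k)
  then obtain N where N: "\<forall>b<k. b \<in> C' \<longrightarrow> b \<in> gg N ` DD N" by blast
  have prev: "\<forall>b<k. b \<in> C' \<longrightarrow> b \<in> gg (Suc N) ` DD (Suc N)" using N used_mono[of N "Suc N"] by auto
  show ?case
  proof (cases "k \<in> C' \<and> k \<notin> gg N ` DD N")
    case False then show ?thesis using N by (intro exI[of _ N]) (auto simp: less_Suc_eq)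
  next
    case True
    have e: "st N = (DD N, gg N)" by simp
    obtain v w where vw: "v \<notin> DD N" "w \<notin> insert v (DD N)"
     "DD (Suc N) = insert w (insert v (DD N))"
     "gg (Suc N) = ((gg N)(v := ext_pt (DD N) (gg N)))(w := fillpt (insert v (DD N)) ((gg N)(v := ext_pt (DD N) (gg N))))"
    proof -
      have e2: "st (Suc N) = step (DD N, gg N)" by (simp add: st_Suc)
      show ?thesis using step_form[OF Inv_st[of N]] that unfolding e2 by blast
    qed
    define D1 where "D1 = insert v (DD N)"
    define g1 where "g1 = (gg N)(v := ext_pt (DD N) (gg N))"
    have g1D: "\<forall>x\<in>DD N. g1 x = gg N x" using vw(1) g1_def by auto
    have "k \<in> gg (Suc N) ` DD (Suc N)"
    proof (cases "k \<in> g1 ` D1")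
      case True
      then obtain x where "x \<in> D1" "k = g1 x" by auto
      then show ?thesis using vw(2,3,4) D1_def g1_def by auto
    next
      case False
      have "fillpt D1 g1 = k" unfolding fillpt_def
      proof (rule Least_equality)
        show "k \<in> C' \<and> k \<notin> g1 ` D1" using True False by auto
        fix a assume a: "a \<in> C' \<and> a \<notin> g1 ` D1"
        show "k \<le> a"
        proof (rule ccontr)
          assume "\<not> k \<le> a"
          then have "a \<in> gg N ` DD N" using N a by auto
          then have "a \<in> g1 ` D1" using g1D D1_def by force
          then show False using a by simp
        qed
      qed
      then show ?thesis using vw(3,4) D1_def g1_def by auto
    qed
    then show ?thesis using prev by (intro exI[of _ "Suc N"]) (auto simp: less_Suc_eq)
  qed
qed

lemma C'_image: "C' \<subseteq> f ` V"
proof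
  fix b assume "b \<in> C'"
  obtain N where "\<forall>b'<Suc b. b' \<in> C' \<longrightarrow> b' \<in> gg N ` DD N" using fill_cover by blast
  then obtain x where "x \<in> DD N" "b = gg N x" using \<open>b \<in> C'\<close> by blast
  then show "b \<in> f ` V" using f_eq DD_V by force
qed

lemma result: "\<exists>f. mono_copy V E c f \<and> upper_density (f ` V) > 0"
proof -
  have "0 < upper_density C'" using C'_out by (rule out_pos)
  also have "\<dots> \<le> upper_density (f ` V)" using C'_image by (rule ud_mono)
  finally show ?thesis using f_mono_copy by blast
qed

end

theorem mainTheorem3:
  fixes V :: "'a set" and E :: "'a \<Rightarrow> 'a \<Rightarrow> bool"
  assumes "simple_graph V E"
    and "countable V" and "infinite V"
    and "\<exists>S. finite S \<and> S \<subseteq> V \<and> \<not> (\<exists>X. finite X \<and> dominating (V - S) E X)"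
  shows "\<forall>r::nat. \<forall>c. edge_coloring r c \<longrightarrow>
           (\<exists>f. mono_copy V E c f \<and> upper_density (f ` V) > 0)"
proof (intro allI impI)
  fix r :: nat and c assume col: "edge_coloring r c"
  obtain S where S: "finite S" "S \<subseteq> V" "\<not> (\<exists>X. finite X \<and> dominating (V - S) E X)"
    using assms(4) by blast
  obtain I where I: "is_ideal I" "\<forall>A. A \<in> I \<or> -A \<in> I" using exists_max_ideal by blast
  interpret bigsets I using I by unfold_locales auto
  obtain i C where iC: "C \<subseteq> {1..}" "C \<notin> I" "\<forall>x\<in>C. Nb c i x \<notin> I"
    using color_set[OF col] by blast
  have en: "bij_betw (from_nat_into V) UNIV V" using bij_betw_from_nat_into assms(2,3) by blast
  interpret constr I V E S c i C "from_nat_into V"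
    using assms(1,3) en S iC by unfold_locales auto
  show "\<exists>f. mono_copy V E c f \<and> upper_density (f ` V) > 0" by (rule result)
qed

end
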